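(* Let $(G,\sigma)$ be a signed graph and $S\subseteq V(G)$. Then $S$ is $s$-redundant if and only if for every $z\in S$ and every $x,y\in N(z)\setminus S$ with $xy\notin E(G)$, there exists $w\in V(G)\setminus S$ such that $x w y z$ is a balanced $4$-cycle of $(G,\sigma)$.
   Context: A signed graph $(G,\sigma)$ is a simple loopless undirected graph with a signature $\sigma:E(G)\to\{+1,-1\}$. Switching a vertex negates the signs of its incident edges; two signatures are equivalent if one is obtained from the other by switching a set of vertices. A path or cycle is balanced if the product of the signs of its edges is $+1$ and unbalanced otherwise; $UP_3$ denotes an unbalanced path on $3$ vertices. $N(z)$ is the neighbourhood of $z$. A set $S\subseteq V(G)$ is $s$-redundant if for all $x,y\in V(G)\setminus S$ with $xy\notin E(G)$, every $z\in S$ and every signature $\sigma'$ equivalent to $\sigma$: if $xzy$ is a $UP_3$ in $(G,\sigma')$, then there exists $w\in V(G)\setminus S$ such that $xwy$ is a $UP_3$ in $(G,\sigma')$. *)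

theory Defs
  imports Main
begin

definition signed_graph :: "'a set \<Rightarrow> ('a \<Rightarrow> 'a \<Rightarrow> bool) \<Rightarrow> ('a \<Rightarrow> 'a \<Rightarrow> int) \<Rightarrow> bool" where
  "signed_graph V E sig \<longleftrightarrow> finite V \<and> (\<forall>u v. E u v \<longrightarrow> u \<in> V \<and> v \<in> V)
     \<and> (\<forall>u v. E u v \<longrightarrow> E v u) \<and> (\<forall>u. \<not> E u u)
     \<and> (\<forall>u v. E u v \<longrightarrow> sig u v = sig v u \<and> (sig u v = 1 \<or> sig u v = -1))"

definition switch :: "'a set \<Rightarrow> ('a \<Rightarrow> 'a \<Rightarrow> int) \<Rightarrow> 'a \<Rightarrow> 'a \<Rightarrow> int" where
  "switch X sig u v = (if (u \<in> X) \<noteq> (v \<in> X) then - sig u v else sig u v)"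

definition equiv_sig :: "'a set \<Rightarrow> ('a \<Rightarrow> 'a \<Rightarrow> bool) \<Rightarrow> ('a \<Rightarrow> 'a \<Rightarrow> int) \<Rightarrow> ('a \<Rightarrow> 'a \<Rightarrow> int) \<Rightarrow> bool" where
  "equiv_sig V E sig sig' \<longleftrightarrow> (\<exists>X\<subseteq>V. \<forall>u v. E u v \<longrightarrow> sig' u v = switch X sig u v)"

definition nbhd :: "('a \<Rightarrow> 'a \<Rightarrow> bool) \<Rightarrow> 'a \<Rightarrow> 'a set" where
  "nbhd E z = {v. E z v}"

definition UP3 :: "('a \<Rightarrow> 'a \<Rightarrow> bool) \<Rightarrow> ('a \<Rightarrow> 'a \<Rightarrow> int) \<Rightarrow> 'a \<Rightarrow> 'a \<Rightarrow> 'a \<Rightarrow> bool" where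
  "UP3 E sig x z y \<longleftrightarrow> distinct [x, z, y] \<and> E x z \<and> E z y \<and> sig x z * sig z y = -1"

definition balanced_C4 :: "('a \<Rightarrow> 'a \<Rightarrow> bool) \<Rightarrow> ('a \<Rightarrow> 'a \<Rightarrow> int) \<Rightarrow> 'a \<Rightarrow> 'a \<Rightarrow> 'a \<Rightarrow> 'a \<Rightarrow> bool" where
  "balanced_C4 E sig a b c d \<longleftrightarrow> distinct [a, b, c, d] \<and> E a b \<and> E b c \<and> E c d \<and> E d a
     \<and> sig a b * sig b c * sig c d * sig d a = 1"

definition s_redundant :: "'a set \<Rightarrow> ('a \<Rightarrow> 'a \<Rightarrow> bool) \<Rightarrow> ('a \<Rightarrow> 'a \<Rightarrow> int) \<Rightarrow> 'a set \<Rightarrow> bool" where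
  "s_redundant V E sig S \<longleftrightarrow>
     (\<forall>x \<in> V - S. \<forall>y \<in> V - S. \<not> E x y \<longrightarrow>
       (\<forall>z \<in> S. \<forall>sig'. equiv_sig V E sig sig' \<longrightarrow> UP3 E sig' x z y \<longrightarrow>
          (\<exists>w \<in> V - S. UP3 E sig' x w y)))"

end

theory Submission
  imports Defs
begin

definition sgnf :: "'a set \<Rightarrow> 'a \<Rightarrow> int" where
  "sgnf X u = (if u \<in> X then -1 else 1)"

lemma switch_eq: "switch X sig u v = sgnf X u * sgnf X v * sig u v"
  by (simp add: switch_def sgnf_def)

lemma sgnf_sq: "sgnf X u * sgnf X u = 1"
  by (simp add: sgnf_def)

lemma C4_switch:
  "switch X sig a b * switch X sig b c * switch X sig c d * switch X sig d a
   = sig a b * sig b c * sig c d * sig d a"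
proof -
  have "switch X sig a b * switch X sig b c * switch X sig c d * switch X sig d a
    = (sgnf X a * sgnf X a) * (sgnf X b * sgnf X b) * (sgnf X c * sgnf X c) * (sgnf X d * sgnf X d)
      * (sig a b * sig b c * sig c d * sig d a)"
    by (simp add: switch_eq algebra_simps)
  then show ?thesis by (simp add: sgnf_sq)
qed

lemma pm1_cases: "(a::int) = 1 \<or> a = -1 \<Longrightarrow> a * a = 1"
  by auto

theorem proposition5p2:
  fixes V :: "'a set" and E :: "'a \<Rightarrow> 'a \<Rightarrow> bool" and sig :: "'a \<Rightarrow> 'a \<Rightarrow> int" and S :: "'a set"
  assumes "signed_graph V E sig" and "S \<subseteq> V"
  shows "s_redundant V E sig S \<longleftrightarrow>
    (\<forall>z \<in> S. \<forall>x \<in> nbhd E z - S. \<forall>y \<in> nbhd E z - S. x \<noteq> y \<longrightarrow> \<not> E x y \<longrightarrow>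
       (\<exists>w \<in> V - S. balanced_C4 E sig x w y z))"
proof
  have inV: "\<And>u v. E u v \<Longrightarrow> u \<in> V \<and> v \<in> V" and sym: "\<And>u v. E u v \<Longrightarrow> E v u"
    and irr: "\<And>u. \<not> E u u"
    and sg: "\<And>u v. E u v \<Longrightarrow> sig u v = sig v u \<and> (sig u v = 1 \<or> sig u v = -1)"
    using assms(1) unfolding signed_graph_def by blast+
  {
    assume R: "s_redundant V E sig S"
    show "\<forall>z \<in> S. \<forall>x \<in> nbhd E z - S. \<forall>y \<in> nbhd E z - S. x \<noteq> y \<longrightarrow> \<not> E x y \<longrightarrow>
       (\<exists>w \<in> V - S. balanced_C4 E sig x w y z)"
    proof (intro ballI impI)
      fix z x y assume z: "z \<in> S" and x: "x \<in> nbhd E z - S" and y: "y \<in> nbhd E z - S"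
        and xy: "x \<noteq> y" and nxy: "\<not> E x y"
      have Ezx: "E z x" and Ezy: "E z y" using x y by (auto simp: nbhd_def)
      have xV: "x \<in> V" "y \<in> V" using inV Ezx Ezy by auto
      have zx: "z \<noteq> x" "z \<noteq> y" using z x y by auto
      obtain X where XV: "X \<subseteq> V" and up: "switch X sig x z * switch X sig z y = -1"
      proof (cases "sig x z * sig z y = -1")
        case True
        then show ?thesis using that[of "{}"] by (simp add: switch_def)
      next
        case False
        have "sig x z = 1 \<or> sig x z = -1" "sig z y = 1 \<or> sig z y = -1"
          using sg[OF sym[OF Ezx]] sg[OF Ezy] by auto
        with False have "- sig x z * sig z y = -1" by auto
        then show ?thesis using that[of "{x}"] xV zx xy by (simp add: switch_def)
      qed
      define sig' where "sig' = switch X sig"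
      have eq: "equiv_sig V E sig sig'" unfolding equiv_sig_def sig'_def using XV by blast
      have "UP3 E sig' x z y" unfolding UP3_def sig'_def
        using up zx xy sym[OF Ezx] Ezy by auto
      then obtain w where w: "w \<in> V - S" and uw: "UP3 E sig' x w y"
        using R z x y xV nxy eq unfolding s_redundant_def by blast
      have wz: "w \<noteq> z" using w z by auto
      have Exw: "E x w" "E w y" and d: "distinct [x,w,y]" using uw unfolding UP3_def by auto
      have p1: "sig' x w * sig' w y = -1" using uw unfolding UP3_def by auto
      have p2: "sig' y z * sig' z x = -1"
      proof -
        have "sig' y z = sig' z y" "sig' z x = sig' x z"
          unfolding sig'_def switch_def using sg[OF Ezy] sg[OF Ezx] by auto
        then show ?thesis using up sig'_def by (simp add: mult.commute)
      qed
      have "sig' x w * sig' w y * sig' y z * sig' z x = (sig' x w * sig' w y) * (sig' y z * sig' z x)"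
        by (simp only: mult.assoc)
      also have "\<dots> = 1" using p1 p2 by simp
      finally have "sig' x w * sig' w y * sig' y z * sig' z x = 1" .
      then have "sig x w * sig w y * sig y z * sig z x = 1"
        using C4_switch[of X sig x w y z] sig'_def by simp
      then have "balanced_C4 E sig x w y z" unfolding balanced_C4_def
        using d wz zx Exw sym[OF Ezy] Ezx by auto
      then show "\<exists>w \<in> V - S. balanced_C4 E sig x w y z" using w by blast
    qed
  }
  {
    assume H: "\<forall>z \<in> S. \<forall>x \<in> nbhd E z - S. \<forall>y \<in> nbhd E z - S. x \<noteq> y \<longrightarrow> \<not> E x y \<longrightarrow>
       (\<exists>w \<in> V - S. balanced_C4 E sig x w y z)"
    show "s_redundant V E sig S" unfolding s_redundant_def
    proof (intro ballI allI impI)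
      fix x y z sig' assume x: "x \<in> V - S" and y: "y \<in> V - S" and nxy: "\<not> E x y"
        and z: "z \<in> S" and eq: "equiv_sig V E sig sig'" and u: "UP3 E sig' x z y"
      obtain X where X: "\<And>u v. E u v \<Longrightarrow> sig' u v = switch X sig u v"
        using eq unfolding equiv_sig_def by blast
      have Exz: "E x z" "E z y" and d: "distinct [x,z,y]" and p: "sig' x z * sig' z y = -1"
        using u unfolding UP3_def by auto
      have "x \<in> nbhd E z - S" "y \<in> nbhd E z - S" using x y sym[OF Exz(1)] Exz(2)
        by (auto simp: nbhd_def)
      then obtain w where w: "w \<in> V - S" and b: "balanced_C4 E sig x w y z"
        using H z d nxy by fastforce
      have E4: "E x w" "E w y" "E y z" "E z x" and d4: "distinct [x,w,y,z]"
        and pb: "sig x w * sig w y * sig y z * sig z x = 1"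
        using b unfolding balanced_C4_def by auto
      have "sig' x w * sig' w y * sig' y z * sig' z x = 1"
        using C4_switch[of X sig x w y z] pb X E4 by simp
      moreover have "sig' y z * sig' z x = -1"
      proof -
        have "sig' y z = sig' z y" "sig' z x = sig' x z"
          using X[OF E4(3)] X[OF Exz(2)] X[OF E4(4)] X[OF Exz(1)]
            sg[OF Exz(1)] sg[OF Exz(2)] unfolding switch_def by auto
        then show ?thesis using p by (simp add: mult.commute)
      qed
      moreover have "sig' x w = 1 \<or> sig' x w = -1" "sig' w y = 1 \<or> sig' w y = -1"
        using X[OF E4(1)] X[OF E4(2)] sg[OF E4(1)] sg[OF E4(2)] unfolding switch_def by auto
      ultimately have "sig' x w * sig' w y = -1" by auto
      then have "UP3 E sig' x w y" unfolding UP3_def using d4 E4 by auto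
      then show "\<exists>w \<in> V - S. UP3 E sig' x w y" using w by blast
    qed
  }
qed

end
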